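(* Let $P$ be the transition matrix of a reversible and ergodic Markov chain on $V$ with stationary distribution $\pi$ and mixing rate $t^*$. For the billiard router model for $P$, with any initial configuration, $$\left|\chi^{(T)}_w-\mu^{(T)}_w\right|\le\frac{6\pi_w}{\pi_{\min}}\,t^*\,(\Delta-1)$$ for all $w\in V$ and $T\ge0$.
   Context: Let $V=\{1,\dots,N\}$ and let $P\in\mathbb{R}_{\ge 0}^{N\times N}$ be an ergodic (irreducible, aperiodic) stochastic matrix with stationary distribution $\pi$; $\pi_{\min}=\min_v\pi_v$; reversible means $\pi_uP_{u,v}=\pi_vP_{v,u}$ for all $u,v$. For $v\in V$ let $\mathcal N(v)=\{u: P_{v,u}>0\}$, $\delta(v)=|\mathcal N(v)|$, $\Delta=\max_v\delta(v)$. Total variation distance $d_{TV}(\xi,\zeta)=\frac12\|\xi-\zeta\|_1$; mixing time $\tau(\varepsilon)=\max_{v}\min\{t\ge0: d_{TV}(P^t_{v,\cdot},\pi)\le\varepsilon\}$; mixing rate $t^*=\tau(1/4)$. A functional-router model consists of functions $\sigma_v:\mathbb{Z}_{\ge0}\to\mathcal N(v)$; write $I_{v,u}[z,z')=|\{j\in\{z,\dots,z'-1\}:\sigma_v(j)=u\}|$ (zero if $z'\le z$). Given $\chi^{(0)}\in\mathbb{Z}_{\ge0}^N$, set $Z^{(t)}_{v,u}=I_{v,u}\big[\sum_{s=0}^{t-1}\chi^{(s)}_v,\sum_{s=0}^{t}\chi^{(s)}_v\big)$, $\chi^{(t+1)}_u=\sum_vZ^{(t)}_{v,u}$, $\mu^{(0)}=\chi^{(0)}$,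 $\mu^{(t)}=\mu^{(0)}P^t$. The billiard router is defined recursively: $\sigma_v(i)$ is an element $u\in\mathcal N(v)$ minimizing $(I_{v,u}[0,i)+1)/P_{v,u}$ (ties broken arbitrarily). It is known (billiard sequences) that for this router $|I_{v,u}[z,z')-(z'-z)P_{v,u}|\le 1+(\delta(v)-2)P_{v,u}$ for all $v,u$ and $z'>z\ge0$. *)

theory Defs
  imports Complex_Main
begin

fun mpow :: "('v::finite \<Rightarrow> 'v \<Rightarrow> real) \<Rightarrow> nat \<Rightarrow> 'v \<Rightarrow> 'v \<Rightarrow> real" where
  "mpow P 0 = (\<lambda>u w. if u = w then 1 else 0)"
| "mpow P (Suc t) = (\<lambda>u w. \<Sum>v\<in>UNIV. mpow P t u v * P v w)"

definition stochastic :: "('v::finite \<Rightarrow> 'v \<Rightarrow> real) \<Rightarrow> bool" where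
  "stochastic P \<longleftrightarrow> (\<forall>u v. P u v \<ge> 0) \<and> (\<forall>u. (\<Sum>v\<in>UNIV. P u v) = 1)"

definition irreducible_chain :: "('v::finite \<Rightarrow> 'v \<Rightarrow> real) \<Rightarrow> bool" where
  "irreducible_chain P \<longleftrightarrow> (\<forall>u v. \<exists>t. mpow P t u v > 0)"

definition aperiodic_chain :: "('v::finite \<Rightarrow> 'v \<Rightarrow> real) \<Rightarrow> bool" where
  "aperiodic_chain P \<longleftrightarrow> (\<forall>v. Gcd {t::nat. t \<ge> 1 \<and> mpow P t v v > 0} = 1)"

definition ergodic :: "('v::finite \<Rightarrow> 'v \<Rightarrow> real) \<Rightarrow> bool" where
  "ergodic P \<longleftrightarrow> stochastic P \<and> irreducible_chain P \<and> aperiodic_chain P"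

definition stationary :: "('v::finite \<Rightarrow> 'v \<Rightarrow> real) \<Rightarrow> ('v \<Rightarrow> real) \<Rightarrow> bool" where
  "stationary P \<pi> \<longleftrightarrow> (\<forall>v. \<pi> v \<ge> 0) \<and> (\<Sum>v\<in>UNIV. \<pi> v) = 1
      \<and> (\<forall>w. (\<Sum>v\<in>UNIV. \<pi> v * P v w) = \<pi> w)"

definition reversible :: "('v::finite \<Rightarrow> 'v \<Rightarrow> real) \<Rightarrow> ('v \<Rightarrow> real) \<Rightarrow> bool" where
  "reversible P \<pi> \<longleftrightarrow> (\<forall>u v. \<pi> u * P u v = \<pi> v * P v u)"

definition pi_min :: "('v::finite \<Rightarrow> real) \<Rightarrow> real" where
  "pi_min \<pi> = Min (range \<pi>)"

definition dTV :: "('v::finite \<Rightarrow> real) \<Rightarrow> ('v \<Rightarrow> real) \<Rightarrow> real" where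
  "dTV \<xi> \<zeta> = (1/2) * (\<Sum>v\<in>UNIV. \<bar>\<xi> v - \<zeta> v\<bar>)"

definition mixing_time :: "('v::finite \<Rightarrow> 'v \<Rightarrow> real) \<Rightarrow> ('v \<Rightarrow> real) \<Rightarrow> real \<Rightarrow> nat" where
  "mixing_time P \<pi> \<epsilon> = Max (range (\<lambda>v. LEAST t. dTV (mpow P t v) \<pi> \<le> \<epsilon>))"

definition mixing_rate :: "('v::finite \<Rightarrow> 'v \<Rightarrow> real) \<Rightarrow> ('v \<Rightarrow> real) \<Rightarrow> nat" where
  "mixing_rate P \<pi> = mixing_time P \<pi> (1/4)"

definition nbhd :: "('v::finite \<Rightarrow> 'v \<Rightarrow> real) \<Rightarrow> 'v \<Rightarrow> 'v set" where
  "nbhd P v = {u. P v u > 0}"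

definition max_degree :: "('v::finite \<Rightarrow> 'v \<Rightarrow> real) \<Rightarrow> nat" where
  "max_degree P = Max (range (\<lambda>v. card (nbhd P v)))"

definition Icnt :: "('v \<Rightarrow> nat \<Rightarrow> 'v) \<Rightarrow> 'v \<Rightarrow> 'v \<Rightarrow> nat \<Rightarrow> nat \<Rightarrow> nat" where
  "Icnt \<sigma> v u z z' = card {j. z \<le> j \<and> j < z' \<and> \<sigma> v j = u}"

definition functional_router :: "('v::finite \<Rightarrow> 'v \<Rightarrow> real) \<Rightarrow> ('v \<Rightarrow> nat \<Rightarrow> 'v) \<Rightarrow> bool" where
  "functional_router P \<sigma> \<longleftrightarrow> (\<forall>v i. \<sigma> v i \<in> nbhd P v)"

definition billiard_router :: "('v::finite \<Rightarrow> 'v \<Rightarrow> real) \<Rightarrow> ('v \<Rightarrow> nat \<Rightarrow> 'v) \<Rightarrow> bool" where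
  "billiard_router P \<sigma> \<longleftrightarrow> functional_router P \<sigma> \<and>
     (\<forall>v i u. u \<in> nbhd P v \<longrightarrow>
        (real (Icnt \<sigma> v (\<sigma> v i) 0 i) + 1) / P v (\<sigma> v i) \<le> (real (Icnt \<sigma> v u 0 i) + 1) / P v u)"

text \<open>router_state sigma chi0 t = (chi^(t), v \<mapsto> sum_{s<t} chi^(s)_v).\<close>
fun router_state :: "('v::finite \<Rightarrow> nat \<Rightarrow> 'v) \<Rightarrow> ('v \<Rightarrow> nat) \<Rightarrow> nat \<Rightarrow> ('v \<Rightarrow> nat) \<times> ('v \<Rightarrow> nat)" where
  "router_state \<sigma> \<chi>0 0 = (\<chi>0, \<lambda>_. 0)"
| "router_state \<sigma> \<chi>0 (Suc t) =
     (let (c, S) = router_state \<sigma> \<chi>0 t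
      in (\<lambda>u. \<Sum>v\<in>UNIV. Icnt \<sigma> v u (S v) (S v + c v), \<lambda>v. S v + c v))"

definition chi :: "('v::finite \<Rightarrow> nat \<Rightarrow> 'v) \<Rightarrow> ('v \<Rightarrow> nat) \<Rightarrow> nat \<Rightarrow> 'v \<Rightarrow> nat" where
  "chi \<sigma> \<chi>0 t = fst (router_state \<sigma> \<chi>0 t)"

definition mu :: "('v::finite \<Rightarrow> 'v \<Rightarrow> real) \<Rightarrow> ('v \<Rightarrow> nat) \<Rightarrow> nat \<Rightarrow> 'v \<Rightarrow> real" where
  "mu P \<chi>0 t w = (\<Sum>v\<in>UNIV. real (\<chi>0 v) * mpow P t v w)"

end

theory Submission
  imports Defs
begin

lemma mpow_add: "mpow P (a+b) u w = (\<Sum>y\<in>UNIV. mpow P a u y * mpow P b y w)"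
proof (induction b arbitrary: w)
  case 0
  then show ?case by (simp add: if_distrib cong: if_cong)
next
  case (Suc b)
  have "mpow P (a + Suc b) u w = (\<Sum>z\<in>UNIV. mpow P (a+b) u z * P z w)" by simp
  also have "\<dots> = (\<Sum>z\<in>UNIV. \<Sum>y\<in>UNIV. mpow P a u y * mpow P b y z * P z w)"
    by (simp add: Suc sum_distrib_right)
  also have "\<dots> = (\<Sum>y\<in>UNIV. \<Sum>z\<in>UNIV. mpow P a u y * mpow P b y z * P z w)"
    by (rule sum.swap)
  also have "\<dots> = (\<Sum>y\<in>UNIV. mpow P a u y * mpow P (Suc b) y w)"
    by (simp add: sum_distrib_left mult.assoc)
  finally show ?case .
qed

lemma mpow_one: "mpow P 1 u w = P u w"
proof -
  have "(\<Sum>v\<in>UNIV. (if u = v then 1 else 0) * P v w) = (\<Sum>v\<in>UNIV. if u = v then P v w else 0)"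
    by (rule sum.cong) auto
  then show ?thesis by simp
qed

lemma mpow_Suc_left: "mpow P (Suc t) u w = (\<Sum>y\<in>UNIV. P u y * mpow P t y w)"
proof -
  have "mpow P (Suc t) u w = mpow P (1+t) u w" by simp
  also have "\<dots> = (\<Sum>y\<in>UNIV. P u y * mpow P t y w)" by (simp only: mpow_add mpow_one)
  finally show ?thesis .
qed

lemma mpow_nonneg: assumes "stochastic P" shows "mpow P t u w \<ge> 0"
proof (induction t arbitrary: w)
  case 0 then show ?case by simp
next
  case (Suc t)
  have "\<forall>u v. P u v \<ge> 0" using assms unfolding stochastic_def by blast
  then show ?case using Suc by (simp add: sum_nonneg)
qed

lemma mpow_rowsum: assumes "stochastic P" shows "(\<Sum>w\<in>UNIV. mpow P t u w) = 1"
proof (induction t)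
  case 0 then show ?case by simp
next
  case (Suc t)
  have rs: "\<And>y. (\<Sum>w\<in>UNIV. P y w) = 1" using assms unfolding stochastic_def by blast
  have "(\<Sum>w\<in>UNIV. mpow P (Suc t) u w) = (\<Sum>w\<in>UNIV. \<Sum>y\<in>UNIV. mpow P t u y * P y w)"
    by simp
  also have "\<dots> = (\<Sum>y\<in>UNIV. \<Sum>w\<in>UNIV. mpow P t u y * P y w)"
    by (rule sum.swap)
  also have "\<dots> = (\<Sum>y\<in>UNIV. mpow P t u y * (\<Sum>w\<in>UNIV. P y w))"
    by (simp add: sum_distrib_left)
  also have "\<dots> = 1" using Suc by (simp add: rs)
  finally show ?case .
qed

lemma mpow_stat: assumes "stationary P \<pi>" shows "(\<Sum>v\<in>UNIV. \<pi> v * mpow P t v w) = \<pi> w"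
proof (induction t arbitrary: w)
  case 0
  have "(\<Sum>v\<in>UNIV. \<pi> v * mpow P 0 v w) = (\<Sum>v\<in>UNIV. if v = w then \<pi> v else 0)"
    by (rule sum.cong) auto
  then show ?case by simp
next
  case (Suc t)
  have st: "\<And>w. (\<Sum>v\<in>UNIV. \<pi> v * P v w) = \<pi> w" using assms unfolding stationary_def by blast
  have "(\<Sum>v\<in>UNIV. \<pi> v * mpow P (Suc t) v w) = (\<Sum>v\<in>UNIV. \<Sum>y\<in>UNIV. \<pi> v * mpow P t v y * P y w)"
    by (simp add: sum_distrib_left mult.assoc)
  also have "\<dots> = (\<Sum>y\<in>UNIV. \<Sum>v\<in>UNIV. \<pi> v * mpow P t v y * P y w)"
    by (rule sum.swap)
  also have "\<dots> = (\<Sum>y\<in>UNIV. (\<Sum>v\<in>UNIV. \<pi> v * mpow P t v y) * P y w)"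
    by (simp add: sum_distrib_right)
  also have "\<dots> = \<pi> w" using Suc by (simp add: st)
  finally show ?case .
qed

lemma mpow_rev: assumes "reversible P \<pi>"
  shows "\<pi> u * mpow P t u w = \<pi> w * mpow P t w u"
proof (induction t arbitrary: u w)
  case 0 then show ?case by simp
next
  case (Suc t)
  have "\<pi> u * mpow P (Suc t) u w = (\<Sum>y\<in>UNIV. (\<pi> u * mpow P t u y) * P y w)"
    by (simp add: sum_distrib_left mult.assoc)
  also have "\<dots> = (\<Sum>y\<in>UNIV. mpow P t y u * (\<pi> y * P y w))"
    by (simp add: Suc mult.commute mult.left_commute)
  also have "\<dots> = (\<Sum>y\<in>UNIV. mpow P t y u * (\<pi> w * P w y))"
    using assms by (simp add: reversible_def)
  also have "\<dots> = \<pi> w * mpow P (Suc t) w u"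
    by (simp only: mpow_Suc_left) (simp add: sum_distrib_left mult.commute mult.left_commute)
  finally show ?case .
qed

lemma contract_gen:
  fixes a :: "'v::finite \<Rightarrow> real" and Q :: "'v \<Rightarrow> 'v \<Rightarrow> real" and c :: "'v \<Rightarrow> real"
  assumes Qc: "\<And>y z. c z \<le> Q y z" and rs: "\<And>y. (\<Sum>z\<in>UNIV. Q y z) = 1"
    and a0: "(\<Sum>y\<in>UNIV. a y) = 0"
  shows "(\<Sum>z\<in>UNIV. \<bar>\<Sum>y\<in>UNIV. a y * Q y z\<bar>) \<le> (1 - (\<Sum>z\<in>UNIV. c z)) * (\<Sum>y\<in>UNIV. \<bar>a y\<bar>)"
proof -
  have eq: "(\<Sum>y\<in>UNIV. a y * Q y z) = (\<Sum>y\<in>UNIV. a y * (Q y z - c z))" for z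
  proof -
    have "(\<Sum>y\<in>UNIV. a y * (Q y z - c z)) = (\<Sum>y\<in>UNIV. a y * Q y z) - (\<Sum>y\<in>UNIV. a y) * c z"
      by (simp add: right_diff_distrib sum_subtractf sum_distrib_right)
    then show ?thesis using a0 by simp
  qed
  have "(\<Sum>z\<in>UNIV. \<bar>\<Sum>y\<in>UNIV. a y * Q y z\<bar>) \<le> (\<Sum>z\<in>UNIV. \<Sum>y\<in>UNIV. \<bar>a y\<bar> * (Q y z - c z))"
  proof (rule sum_mono)
    fix z
    have "\<bar>\<Sum>y\<in>UNIV. a y * (Q y z - c z)\<bar> \<le> (\<Sum>y\<in>UNIV. \<bar>a y * (Q y z - c z)\<bar>)"
      by (rule sum_abs)
    also have "\<dots> = (\<Sum>y\<in>UNIV. \<bar>a y\<bar> * (Q y z - c z))"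
      using Qc by (simp add: abs_mult)
    finally show "\<bar>\<Sum>y\<in>UNIV. a y * Q y z\<bar> \<le> (\<Sum>y\<in>UNIV. \<bar>a y\<bar> * (Q y z - c z))"
      using eq by simp
  qed
  also have "\<dots> = (\<Sum>y\<in>UNIV. \<Sum>z\<in>UNIV. \<bar>a y\<bar> * (Q y z - c z))"
    by (rule sum.swap)
  also have "\<dots> = (\<Sum>y\<in>UNIV. \<bar>a y\<bar> * (1 - (\<Sum>z\<in>UNIV. c z)))"
    by (simp add: sum_distrib_left[symmetric] sum_subtractf rs)
  also have "\<dots> = (1 - (\<Sum>z\<in>UNIV. c z)) * (\<Sum>y\<in>UNIV. \<bar>a y\<bar>)"
    by (metis (no_types) mult.commute sum_distrib_right)
  finally show ?thesis .
qed

lemma contract_stoch: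
  fixes a :: "'v::finite \<Rightarrow> real" and Q :: "'v \<Rightarrow> 'v \<Rightarrow> real"
  assumes Qn: "\<And>y z. 0 \<le> Q y z" and rs: "\<And>y. (\<Sum>z\<in>UNIV. Q y z) = 1"
  shows "(\<Sum>z\<in>UNIV. \<bar>\<Sum>y\<in>UNIV. a y * Q y z\<bar>) \<le> (\<Sum>y\<in>UNIV. \<bar>a y\<bar>)"
proof -
  have "(\<Sum>z\<in>UNIV. \<bar>\<Sum>y\<in>UNIV. a y * Q y z\<bar>) \<le> (\<Sum>z\<in>UNIV. \<Sum>y\<in>UNIV. \<bar>a y\<bar> * Q y z)"
  proof (rule sum_mono)
    fix z
    have "\<bar>\<Sum>y\<in>UNIV. a y * Q y z\<bar> \<le> (\<Sum>y\<in>UNIV. \<bar>a y * Q y z\<bar>)" by (rule sum_abs)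
    also have "\<dots> = (\<Sum>y\<in>UNIV. \<bar>a y\<bar> * Q y z)" using Qn by (simp add: abs_mult)
    finally show "\<bar>\<Sum>y\<in>UNIV. a y * Q y z\<bar> \<le> (\<Sum>y\<in>UNIV. \<bar>a y\<bar> * Q y z)" .
  qed
  also have "\<dots> = (\<Sum>y\<in>UNIV. \<Sum>z\<in>UNIV. \<bar>a y\<bar> * Q y z)" by (rule sum.swap)
  also have "\<dots> = (\<Sum>y\<in>UNIV. \<bar>a y\<bar>)" by (simp add: sum_distrib_left[symmetric] rs)
  finally show ?thesis .
qed

lemma diff_mult:
  assumes "stationary P \<pi>"
  shows "mpow P (s+t) x z - \<pi> z = (\<Sum>y\<in>UNIV. (mpow P s x y - \<pi> y) * mpow P t y z)"
proof -
  have "(\<Sum>y\<in>UNIV. (mpow P s x y - \<pi> y) * mpow P t y z)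
      = (\<Sum>y\<in>UNIV. mpow P s x y * mpow P t y z) - (\<Sum>y\<in>UNIV. \<pi> y * mpow P t y z)"
    by (simp add: left_diff_distrib sum_subtractf)
  also have "\<dots> = mpow P (s+t) x z - \<pi> z"
    by (simp add: mpow_add mpow_stat[OF assms])
  finally show ?thesis by simp
qed

lemma diff_sum0:
  assumes "stationary P \<pi>" "stochastic P"
  shows "(\<Sum>y\<in>UNIV. mpow P s x y - \<pi> y) = 0"
  using assms by (simp add: sum_subtractf mpow_rowsum stationary_def)

lemma dTV_nonneg: "0 \<le> dTV a b"
  unfolding dTV_def by (simp add: sum_nonneg)

lemma dTV_le1:
  assumes "stationary P \<pi>" "stochastic P"
  shows "dTV (mpow P t x) \<pi> \<le> 1"
proof -
  have pn: "\<And>v. 0 \<le> \<pi> v" using assms(1) unfolding stationary_def by blast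
  have "(\<Sum>v\<in>UNIV. \<bar>mpow P t x v - \<pi> v\<bar>) \<le> (\<Sum>v\<in>UNIV. mpow P t x v + \<pi> v)"
    by (rule sum_mono) (use pn mpow_nonneg[OF assms(2)] in \<open>auto simp: abs_le_iff\<close>)
  also have "\<dots> = 2" using assms by (simp add: sum.distrib mpow_rowsum stationary_def)
  finally show ?thesis unfolding dTV_def by simp
qed

lemma dd_mono:
  assumes "stationary P \<pi>" "stochastic P" "t1 \<le> t2"
  shows "dTV (mpow P t2 x) \<pi> \<le> dTV (mpow P t1 x) \<pi>"
proof -
  obtain k where k: "t2 = t1 + k" using assms(3) le_Suc_ex by blast
  have "(\<Sum>z\<in>UNIV. \<bar>mpow P t2 x z - \<pi> z\<bar>)
      = (\<Sum>z\<in>UNIV. \<bar>\<Sum>y\<in>UNIV. (mpow P t1 x y - \<pi> y) * mpow P k y z\<bar>)"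
    unfolding k by (simp add: diff_mult[OF assms(1)])
  also have "\<dots> \<le> (\<Sum>y\<in>UNIV. \<bar>mpow P t1 x y - \<pi> y\<bar>)"
    by (rule contract_stoch) (use mpow_nonneg[OF assms(2)] mpow_rowsum[OF assms(2)] in auto)
  finally show ?thesis unfolding dTV_def by simp
qed

lemma dd_sub:
  assumes "stationary P \<pi>" "stochastic P" and b: "\<And>y. dTV (mpow P t y) \<pi> \<le> b"
  shows "dTV (mpow P (s+t) x) \<pi> \<le> 2 * dTV (mpow P s x) \<pi> * b"
proof -
  define a where "a y = mpow P s x y - \<pi> y" for y
  have a0: "(\<Sum>y\<in>UNIV. a y) = 0" unfolding a_def by (rule diff_sum0[OF assms(1,2)])
  have eq: "mpow P (s+t) x z - \<pi> z = (\<Sum>y\<in>UNIV. a y * (mpow P t y z - \<pi> z))" for z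
  proof -
    have "(\<Sum>y\<in>UNIV. a y * (mpow P t y z - \<pi> z)) = (\<Sum>y\<in>UNIV. a y * mpow P t y z) - (\<Sum>y\<in>UNIV. a y) * \<pi> z"
      by (simp add: right_diff_distrib sum_subtractf sum_distrib_right)
    then show ?thesis using a0 by (simp add: diff_mult[OF assms(1)] a_def)
  qed
  have "(\<Sum>z\<in>UNIV. \<bar>mpow P (s+t) x z - \<pi> z\<bar>) \<le> (\<Sum>z\<in>UNIV. \<Sum>y\<in>UNIV. \<bar>a y\<bar> * \<bar>mpow P t y z - \<pi> z\<bar>)"
  proof (rule sum_mono)
    fix z
    have "\<bar>\<Sum>y\<in>UNIV. a y * (mpow P t y z - \<pi> z)\<bar> \<le> (\<Sum>y\<in>UNIV. \<bar>a y * (mpow P t y z - \<pi> z)\<bar>)"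
      by (rule sum_abs)
    then show "\<bar>mpow P (s+t) x z - \<pi> z\<bar> \<le> (\<Sum>y\<in>UNIV. \<bar>a y\<bar> * \<bar>mpow P t y z - \<pi> z\<bar>)"
      by (simp add: eq abs_mult)
  qed
  also have "\<dots> = (\<Sum>y\<in>UNIV. \<Sum>z\<in>UNIV. \<bar>a y\<bar> * \<bar>mpow P t y z - \<pi> z\<bar>)"
    by (rule sum.swap)
  also have "\<dots> = (\<Sum>y\<in>UNIV. \<bar>a y\<bar> * (\<Sum>z\<in>UNIV. \<bar>mpow P t y z - \<pi> z\<bar>))"
    by (simp add: sum_distrib_left)
  also have "\<dots> \<le> (\<Sum>y\<in>UNIV. \<bar>a y\<bar> * (2*b))"
  proof (rule sum_mono)
    fix y
    have "(\<Sum>z\<in>UNIV. \<bar>mpow P t y z - \<pi> z\<bar>) \<le> 2 * b" using b[of y] unfolding dTV_def by simp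
    then show "\<bar>a y\<bar> * (\<Sum>z\<in>UNIV. \<bar>mpow P t y z - \<pi> z\<bar>) \<le> \<bar>a y\<bar> * (2*b)"
      by (rule mult_left_mono) simp
  qed
  also have "\<dots> = 2 * (2 * dTV (mpow P s x) \<pi> * b)"
    unfolding dTV_def a_def by (simp add: sum_distrib_right sum_distrib_left mult.assoc mult.left_commute)
  finally show ?thesis unfolding dTV_def by simp
qed

lemma semigroup_eventually:
  fixes S :: "nat set"
  assumes add: "\<And>a b. a \<in> S \<Longrightarrow> b \<in> S \<Longrightarrow> a + b \<in> S"
    and pos: "0 \<notin> S" and g: "Gcd S = 1"
  shows "\<exists>n0. \<forall>n\<ge>n0. n \<in> S"
proof -
  define S0 where "S0 = insert 0 S"
  have add0: "a \<in> S0 \<Longrightarrow> b \<in> S0 \<Longrightarrow> a + b \<in> S0" for a b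
    unfolding S0_def using add by auto
  have mul0: "a \<in> S0 \<Longrightarrow> k * a \<in> S0" for a k
  proof (induction k)
    case 0 then show ?case by (simp add: S0_def)
  next
    case (Suc k) then show ?case using add0 by simp
  qed
  have S0S: "n \<in> S0 \<Longrightarrow> n \<noteq> 0 \<Longrightarrow> n \<in> S" for n unfolding S0_def by simp
  have ne: "S \<noteq> {}" using g by auto
  then obtain s where s: "s \<in> S" by blast
  define D where "D = {k::nat. 0 < k \<and> (\<exists>a\<in>S0. \<exists>b\<in>S0. a = b + k)}"
  have s0: "0 < s" using s pos by (cases s) auto
  have "s \<in> S0" "0 \<in> S0" "s = 0 + s" unfolding S0_def using s by auto
  then have sD: "s \<in> D" unfolding D_def using s0 by blast
  define d where "d = (LEAST k. k \<in> D)"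
  have dD: "d \<in> D" unfolding d_def using sD by (rule LeastI)
  have dmin: "k \<in> D \<Longrightarrow> d \<le> k" for k unfolding d_def by (rule Least_le)
  from dD obtain a b where ab: "a \<in> S0" "b \<in> S0" "a = b + d" "0 < d" unfolding D_def by blast
  have ddvd: "d dvd x" if x: "x \<in> S" for x
  proof (rule ccontr)
    assume nd: "\<not> d dvd x"
    define q where "q = x div d"
    define r where "r = x mod d"
    have xr: "x = q * d + r" unfolding q_def r_def by simp
    have r0: "0 < r" using nd unfolding r_def by (simp add: dvd_eq_mod_eq_0)
    have rd: "r < d" unfolding r_def using ab(4) by simp
    have "x + q * b = q * a + r" using xr ab(3) by (simp add: distrib_left)
    moreover have "x + q * b \<in> S0"
    proof -
      have "q * b \<in> S0" by (rule mul0[OF ab(2)])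
      moreover have "x \<in> S0" using x unfolding S0_def by simp
      ultimately show ?thesis using add0 by blast
    qed
    moreover have "q * a \<in> S0" using mul0 ab(1) by blast
    ultimately have "r \<in> D" unfolding D_def using r0 by blast
    then show False using dmin rd by fastforce
  qed
  have "d dvd Gcd S" by (rule Gcd_greatest) (rule ddvd)
  then have d1: "d = 1" using g by simp
  show ?thesis
  proof (cases "b = 0")
    case True
    then have "1 \<in> S" using ab d1 S0S by simp
    then have "\<forall>n\<ge>1. n \<in> S" using mul0[of 1] S0S unfolding S0_def by (metis insertI2 mult.right_neutral not_one_le_zero)
    then show ?thesis by blast
  next
    case False
    have "\<forall>n\<ge>b*b. n \<in> S"
    proof (intro allI impI)
      fix n assume n: "b * b \<le> n"
      define q where "q = n div b"
      define r where "r = n mod b"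
      have nq: "n = q * b + r" unfolding q_def r_def by simp
      have rb: "r < b" unfolding r_def using False by simp
      have qb: "b \<le> q" unfolding q_def using n False
        by (metis div_le_mono nonzero_mult_div_cancel_right)
      have "n = (q - r) * b + r * a" using nq ab(3) d1 rb qb
        by (simp add: algebra_simps diff_mult_distrib)
      moreover have "(q - r) * b + r * a \<in> S0" using add0 mul0 ab by blast
      moreover have "n \<noteq> 0" using n False by (metis mult_is_0 le_zero_eq)
      ultimately show "n \<in> S" using S0S by metis
    qed
    then show ?thesis by blast
  qed
qed

lemma pi_pos:
  assumes "ergodic P" "stationary P \<pi>"
  shows "\<pi> v > 0"
proof -
  have st: "stochastic P" and irr: "irreducible_chain P" using assms(1) unfolding ergodic_def by auto
  have pn: "\<And>v. 0 \<le> \<pi> v" and s1: "(\<Sum>v\<in>UNIV. \<pi> v) = 1" using assms(2) unfolding stationary_def by auto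
  obtain u where u: "\<pi> u > 0"
  proof (rule ccontr)
    assume "\<not> thesis"
    then have "\<forall>u. \<pi> u \<le> 0" using that by (meson not_le)
    then have "(\<Sum>v\<in>UNIV. \<pi> v) \<le> 0" by (simp add: sum_nonpos)
    then show False using s1 by simp
  qed
  obtain t where t: "mpow P t u v > 0" using irr unfolding irreducible_chain_def by blast
  have "\<pi> u * mpow P t u v \<le> (\<Sum>x\<in>UNIV. \<pi> x * mpow P t x v)"
    by (rule member_le_sum) (auto intro: mult_nonneg_nonneg pn mpow_nonneg[OF st])
  also have "\<dots> = \<pi> v" by (rule mpow_stat[OF assms(2)])
  finally show ?thesis using u t by (smt (verit) mult_pos_pos)
qed

lemma pi_min_pos:
  assumes "ergodic P" "stationary P \<pi>"
  shows "pi_min \<pi> > 0" and "pi_min \<pi> \<le> \<pi> v"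
proof -
  have "pi_min \<pi> \<in> range \<pi>" unfolding pi_min_def by (rule Min_in) auto
  then show "pi_min \<pi> > 0" using pi_pos[OF assms] by auto
  show "pi_min \<pi> \<le> \<pi> v" unfolding pi_min_def by (rule Min_le) auto
qed

lemma mpow_mult_le:
  assumes "stochastic P"
  shows "mpow P a x y * mpow P b y z \<le> mpow P (a+b) x z"
  unfolding mpow_add
  by (rule member_le_sum[where f="\<lambda>y. mpow P a x y * mpow P b y z"])
     (auto intro: mult_nonneg_nonneg mpow_nonneg[OF assms])

lemma primitive:
  assumes "ergodic P"
  shows "\<exists>m. \<forall>x y. mpow P m x y > 0"
proof -
  have st: "stochastic P" and irr: "irreducible_chain P" and ap: "aperiodic_chain P"
    using assms unfolding ergodic_def by auto
  have ev: "\<exists>n0. \<forall>n\<ge>n0. mpow P n y y > 0" for y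
  proof -
    have "\<exists>n0. \<forall>n\<ge>n0. n \<in> {t::nat. t \<ge> 1 \<and> mpow P t y y > 0}"
    proof (rule semigroup_eventually)
      fix a b assume "a \<in> {t::nat. t \<ge> 1 \<and> mpow P t y y > 0}" "b \<in> {t::nat. t \<ge> 1 \<and> mpow P t y y > 0}"
      then have "a \<ge> 1" "b \<ge> 1" "mpow P a y y * mpow P b y y > 0" by auto
      then show "a + b \<in> {t::nat. t \<ge> 1 \<and> mpow P t y y > 0}"
        using mpow_mult_le[OF st, of a y y b y] by auto
    next
      show "0 \<notin> {t::nat. t \<ge> 1 \<and> mpow P t y y > 0}" by simp
      show "Gcd {t::nat. t \<ge> 1 \<and> mpow P t y y > 0} = 1" using ap unfolding aperiodic_chain_def by blast
    qed
    then show ?thesis by blast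
  qed
  obtain nf where nf: "\<And>y n. n \<ge> nf y \<Longrightarrow> mpow P n y y > 0" using ev by metis
  obtain tf where tf: "\<And>x y. mpow P (tf x y) x y > 0" using irr unfolding irreducible_chain_def by metis
  define m where "m = (\<Sum>x\<in>UNIV. \<Sum>y\<in>UNIV. tf x y) + (\<Sum>y\<in>UNIV. nf y)"
  have "mpow P m x y > 0" for x y
  proof -
    have "tf x y \<le> (\<Sum>y\<in>UNIV. tf x y)" by (rule member_le_sum) auto
    also have "\<dots> \<le> (\<Sum>x\<in>UNIV. \<Sum>y\<in>UNIV. tf x y)" by (rule member_le_sum[where f="\<lambda>x. \<Sum>y\<in>UNIV. tf x y"]) auto
    finally have t1: "tf x y \<le> (\<Sum>x\<in>UNIV. \<Sum>y\<in>UNIV. tf x y)" .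
    have t2: "nf y \<le> (\<Sum>y\<in>UNIV. nf y)" by (rule member_le_sum) auto
    define k where "k = m - tf x y"
    have mk: "m = tf x y + k" and kn: "k \<ge> nf y" unfolding k_def m_def using t1 t2 by auto
    have "0 < mpow P (tf x y) x y * mpow P k y y" using tf nf[OF kn] by simp
    also have "\<dots> \<le> mpow P m x y" unfolding mk by (rule mpow_mult_le[OF st])
    finally show ?thesis .
  qed
  then show ?thesis by blast
qed

lemma sum_split_nat:
  fixes a b :: nat and g :: "nat \<Rightarrow> real"
  shows "(\<Sum>t<a+b. g t) = (\<Sum>t<a. g t) + (\<Sum>t<b. g (t+a))"
  by (induction b) (simp_all add: add.commute)

lemma geo_sum:
  fixes f :: "nat \<Rightarrow> real"
  assumes f0: "\<And>t. 0 \<le> f t" and f1: "\<And>t. f t \<le> 1" and fq: "\<And>t. m \<le> t \<Longrightarrow> f t \<le> 1/4"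
    and fh: "\<And>t. f (t + m) \<le> f t / 2"
  shows "(\<Sum>t<T. f t) \<le> 3/2 * real m"
proof (cases "m = 0")
  case True
  then have "f t = 0" for t using fh[of t] f0[of t] by simp
  then show ?thesis by simp
next
  case False
  have K: "(\<Sum>t<n. f (t+m)) \<le> real m / 2" for n
  proof (induction n rule: less_induct)
    case (less n)
    show ?case
    proof (cases "n \<le> m")
      case True
      have "(\<Sum>t<n. f (t+m)) \<le> (\<Sum>t<n. 1/4)" by (rule sum_mono) (rule fq, simp)
      also have "\<dots> = real n / 4" by simp
      also have "\<dots> \<le> real m / 2" using True by simp
      finally show ?thesis .
    next
      case nle: False
      then obtain k where nk: "n = m + k" by (metis le_add_diff_inverse less_or_eq_imp_le not_le)
      have kn: "k < n" using nk False by simp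
      have "(\<Sum>t<n. f (t+m)) = (\<Sum>t<m. f (t+m)) + (\<Sum>t<k. f (t+m+m))"
        unfolding nk by (rule sum_split_nat)
      also have "\<dots> \<le> (\<Sum>t<m. 1/4) + (\<Sum>t<k. f (t+m) / 2)"
        by (rule add_mono; rule sum_mono) (rule fq, simp, rule order_trans[OF eq_refl fh], simp add: add.assoc)
      also have "\<dots> = real m / 4 + (\<Sum>t<k. f (t+m)) / 2" by (simp add: sum_divide_distrib)
      also have "\<dots> \<le> real m / 4 + (real m / 2) / 2" using less[OF kn] by simp
      finally show ?thesis by simp
    qed
  qed
  show ?thesis
  proof (cases "T \<le> m")
    case True
    have "(\<Sum>t<T. f t) \<le> (\<Sum>t<T. 1)" by (rule sum_mono) (simp add: f1)
    then show ?thesis using True by simp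
  next
    case nle: False
    then obtain k where nk: "T = m + k" by (metis le_add_diff_inverse less_or_eq_imp_le not_le)
    have "(\<Sum>t<T. f t) = (\<Sum>t<m. f t) + (\<Sum>t<k. f (t+m))" unfolding nk by (rule sum_split_nat)
    also have "\<dots> \<le> (\<Sum>t<m. 1) + real m / 2"
      by (rule add_mono) (rule sum_mono, simp add: f1, rule K)
    finally show ?thesis by simp
  qed
qed

lemma converge:
  assumes "ergodic P" "stationary P \<pi>"
  shows "\<exists>t. dTV (mpow P t x) \<pi> \<le> 1/4"
proof -
  have st: "stochastic P" using assms(1) unfolding ergodic_def by auto
  obtain m where m: "\<And>x y. mpow P m x y > 0" using primitive[OF assms(1)] by blast
  define c where "c z = Min (range (\<lambda>y. mpow P m y z))" for z
  have cle: "c z \<le> mpow P m y z" for y z unfolding c_def by (rule Min_le) auto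
  have cpos: "c z > 0" for z
  proof -
    have "c z \<in> range (\<lambda>y. mpow P m y z)" unfolding c_def by (rule Min_in) auto
    then show ?thesis using m by auto
  qed
  define r where "r = 1 - (\<Sum>z\<in>UNIV. c z)"
  have r1: "r < 1" unfolding r_def
    using sum_pos[of UNIV c] cpos by simp
  have r0: "0 \<le> r"
  proof -
    have "(\<Sum>z\<in>UNIV. c z) \<le> (\<Sum>z\<in>UNIV. mpow P m x z)" by (rule sum_mono) (rule cle)
    then show ?thesis unfolding r_def using mpow_rowsum[OF st] by simp
  qed
  have step: "dTV (mpow P (s+m) x) \<pi> \<le> r * dTV (mpow P s x) \<pi>" for s
  proof -
    have "(\<Sum>z\<in>UNIV. \<bar>mpow P (s+m) x z - \<pi> z\<bar>)
        = (\<Sum>z\<in>UNIV. \<bar>\<Sum>y\<in>UNIV. (mpow P s x y - \<pi> y) * mpow P m y z\<bar>)"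
      by (simp add: diff_mult[OF assms(2)])
    also have "\<dots> \<le> r * (\<Sum>y\<in>UNIV. \<bar>mpow P s x y - \<pi> y\<bar>)"
      unfolding r_def
      by (rule contract_gen) (simp_all add: cle mpow_rowsum[OF st] diff_sum0[OF assms(2) st])
    finally show ?thesis unfolding dTV_def by simp
  qed
  have pw: "dTV (mpow P (k*m) x) \<pi> \<le> r ^ k" for k
  proof (induction k)
    case 0 then show ?case using dTV_le1[OF assms(2) st, of 0 x] by simp
  next
    case (Suc k)
    have "dTV (mpow P (Suc k * m) x) \<pi> = dTV (mpow P (k*m + m) x) \<pi>" by (simp add: add.commute)
    also have "\<dots> \<le> r * dTV (mpow P (k*m) x) \<pi>" by (rule step)
    also have "\<dots> \<le> r * r ^ k" using Suc r0 by (simp add: mult_left_mono)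
    finally show ?case by simp
  qed
  obtain k where "r ^ k < 1/4" using real_arch_pow_inv[OF _ r1, of "1/4"] by auto
  then show ?thesis using pw[of k] by (intro exI[of _ "k*m"]) simp
qed

lemma tstar_bound:
  assumes "ergodic P" "stationary P \<pi>" "mixing_rate P \<pi> \<le> t"
  shows "dTV (mpow P t x) \<pi> \<le> 1/4"
proof -
  have st: "stochastic P" using assms(1) unfolding ergodic_def by auto
  define L where "L = (LEAST t. dTV (mpow P t x) \<pi> \<le> 1/4)"
  have L1: "dTV (mpow P L x) \<pi> \<le> 1/4" unfolding L_def
    using converge[OF assms(1,2), of x] by (metis LeastI_ex)
  have "L \<le> mixing_rate P \<pi>" unfolding mixing_rate_def mixing_time_def L_def
    by (rule Max_ge) auto
  then have "dTV (mpow P t x) \<pi> \<le> dTV (mpow P L x) \<pi>" using assms(3)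
    by (intro dd_mono[OF assms(2) st]) simp
  then show ?thesis using L1 by simp
qed

lemma mix_sum:
  assumes "ergodic P" "stationary P \<pi>"
  shows "(\<Sum>t<T. dTV (mpow P t x) \<pi>) \<le> 3/2 * real (mixing_rate P \<pi>)"
proof (rule geo_sum)
  have st: "stochastic P" using assms(1) unfolding ergodic_def by auto
  show "\<And>t. 0 \<le> dTV (mpow P t x) \<pi>" by (rule dTV_nonneg)
  show "\<And>t. dTV (mpow P t x) \<pi> \<le> 1" by (rule dTV_le1[OF assms(2) st])
  show "\<And>t. mixing_rate P \<pi> \<le> t \<Longrightarrow> dTV (mpow P t x) \<pi> \<le> 1/4" by (rule tstar_bound[OF assms])
  fix t
  have "dTV (mpow P (t + mixing_rate P \<pi>) x) \<pi> \<le> 2 * dTV (mpow P t x) \<pi> * (1/4)"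
    by (rule dd_sub[OF assms(2) st]) (rule tstar_bound[OF assms], simp)
  then show "dTV (mpow P (t + mixing_rate P \<pi>) x) \<pi> \<le> dTV (mpow P t x) \<pi> / 2" by simp
qed

lemma Icnt_Suc:
  assumes "z \<le> i"
  shows "Icnt \<sigma> v u z (Suc i) = Icnt \<sigma> v u z i + (if \<sigma> v i = u then 1 else 0)"
proof -
  have eq: "{j. z \<le> j \<and> j < Suc i \<and> \<sigma> v j = u} = {j. z \<le> j \<and> j < i \<and> \<sigma> v j = u} \<union> (if \<sigma> v i = u then {i} else {})"
    using assms by (auto simp: less_Suc_eq)
  have fin: "finite {j. z \<le> j \<and> j < i \<and> \<sigma> v j = u}" by (rule finite_subset[of _ "{..<i}"]) auto
  show ?thesis unfolding Icnt_def eq using fin by (auto simp: card_insert_if)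
qed

lemma Icnt_empty: "Icnt \<sigma> v u z z = 0"
  unfolding Icnt_def by simp

lemma Icnt_split:
  assumes "z \<le> z'"
  shows "Icnt \<sigma> v u 0 z' = Icnt \<sigma> v u 0 z + Icnt \<sigma> v u z z'"
  using assms
proof (induction z' rule: dec_induct)
  case base then show ?case by (simp add: Icnt_empty)
next
  case (step n) then show ?case by (simp add: Icnt_Suc)
qed

lemma Icnt_sum:
  fixes \<sigma> :: "'v::finite \<Rightarrow> nat \<Rightarrow> 'v"
  assumes "z \<le> z'"
  shows "(\<Sum>u\<in>UNIV. Icnt \<sigma> v u z z') = z' - z"
  using assms
proof (induction z' rule: dec_induct)
  case base then show ?case by (simp add: Icnt_empty)
next
  case (step n)
  have "(\<Sum>u\<in>UNIV. Icnt \<sigma> v u z (Suc n)) = (\<Sum>u\<in>UNIV. Icnt \<sigma> v u z n) + (\<Sum>u\<in>UNIV. (if \<sigma> v n = u then 1 else 0))"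
    using step by (simp add: Icnt_Suc sum.distrib)
  also have "\<dots> = (n - z) + 1"
  proof -
    have "(\<Sum>u\<in>UNIV. (if \<sigma> v n = u then 1 else 0)::nat) = 1" by simp
    then show ?thesis using step by simp
  qed
  finally show ?case using step by simp
qed

lemma Icnt_out:
  assumes "functional_router P \<sigma>" "u \<notin> nbhd P v"
  shows "Icnt \<sigma> v u z z' = 0"
proof -
  have "{j. z \<le> j \<and> j < z' \<and> \<sigma> v j = u} = {}"
    using assms unfolding functional_router_def by auto
  then show ?thesis unfolding Icnt_def by simp
qed

lemma billiard_inv:
  assumes br: "billiard_router P \<sigma>" and u: "u \<in> nbhd P v" and u': "u' \<in> nbhd P v"
  shows "real (Icnt \<sigma> v u 0 i) / P v u \<le> (real (Icnt \<sigma> v u' 0 i) + 1) / P v u'"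
  using u u'
proof (induction i arbitrary: u u')
  case 0
  then show ?case by (simp add: Icnt_empty nbhd_def)
next
  case (Suc i)
  define s where "s = \<sigma> v i"
  have sN: "s \<in> nbhd P v" using br unfolding billiard_router_def functional_router_def s_def by blast
  have pos: "\<And>x. x \<in> nbhd P v \<Longrightarrow> P v x > 0" unfolding nbhd_def by simp
  have min: "\<And>x. x \<in> nbhd P v \<Longrightarrow> (real (Icnt \<sigma> v s 0 i) + 1) / P v s \<le> (real (Icnt \<sigma> v x 0 i) + 1) / P v x"
    using br unfolding billiard_router_def s_def by blast
  have IcS: "\<And>x. Icnt \<sigma> v x 0 (Suc i) = Icnt \<sigma> v x 0 i + (if s = x then 1 else 0)"
    unfolding s_def by (simp add: Icnt_Suc)
  have mono: "(real (Icnt \<sigma> v s 0 i) + 1) / P v s \<le> (real (Icnt \<sigma> v s 0 i) + 1 + 1) / P v s"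
    using pos[OF sN] by (simp add: divide_right_mono)
  have hs: "real (Icnt \<sigma> v s 0 (Suc i)) = real (Icnt \<sigma> v s 0 i) + 1" by (simp add: IcS)
  have hx: "\<And>x. x \<noteq> s \<Longrightarrow> real (Icnt \<sigma> v x 0 (Suc i)) = real (Icnt \<sigma> v x 0 i)" by (simp add: IcS)
  show ?case
  proof (cases "u = s")
    case True
    show ?thesis
    proof (cases "u' = s")
      case True
      show ?thesis unfolding \<open>u = s\<close> True hs by (rule mono)
    next
      case False
      show ?thesis unfolding \<open>u = s\<close> hs hx[OF False] by (rule min[OF Suc.prems(2)])
    qed
  next
    case False
    show ?thesis
    proof (cases "u' = s")
      case True
      have "real (Icnt \<sigma> v u 0 i) / P v u \<le> (real (Icnt \<sigma> v s 0 i) + 1) / P v s"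
        using Suc.IH[OF Suc.prems(1) sN] .
      then show ?thesis unfolding True hs hx[OF \<open>u \<noteq> s\<close>] using mono by linarith
    next
      case False
      show ?thesis unfolding hx[OF False] hx[OF \<open>u \<noteq> s\<close>] by (rule Suc.IH[OF Suc.prems])
    qed
  qed
qed

lemma nbhd_ne:
  assumes "stochastic P" shows "nbhd P v \<noteq> {}"
proof
  assume e: "nbhd P v = {}"
  have "\<forall>u. P v u = 0" using e assms unfolding nbhd_def stochastic_def by (metis empty_Collect_eq order_less_le)
  then have "P v = (\<lambda>u. 0)" by auto
  moreover have "(\<Sum>u\<in>UNIV. P v u) = 1" using assms unfolding stochastic_def by blast
  ultimately show False by simp
qed

lemma billiard_theta:
  assumes br: "billiard_router P \<sigma>" and st: "stochastic P"
  shows "\<exists>\<theta>. \<forall>u\<in>nbhd P v. \<theta> * P v u - 1 \<le> real (Icnt \<sigma> v u 0 i) \<and> real (Icnt \<sigma> v u 0 i) \<le> \<theta> * P v u"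
proof -
  define \<theta> where "\<theta> = Max ((\<lambda>u. real (Icnt \<sigma> v u 0 i) / P v u) ` nbhd P v)"
  have fin: "finite (nbhd P v)" by simp
  have ne: "nbhd P v \<noteq> {}" by (rule nbhd_ne[OF st])
  have pos: "\<And>x. x \<in> nbhd P v \<Longrightarrow> P v x > 0" unfolding nbhd_def by simp
  have "\<theta> \<in> (\<lambda>u. real (Icnt \<sigma> v u 0 i) / P v u) ` nbhd P v"
    unfolding \<theta>_def by (rule Max_in) (use fin ne in auto)
  then obtain u0 where u0: "u0 \<in> nbhd P v" "\<theta> = real (Icnt \<sigma> v u0 0 i) / P v u0" by blast
  have "\<theta> * P v u - 1 \<le> real (Icnt \<sigma> v u 0 i) \<and> real (Icnt \<sigma> v u 0 i) \<le> \<theta> * P v u" if u: "u \<in> nbhd P v" for u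
  proof
    have "\<theta> \<le> (real (Icnt \<sigma> v u 0 i) + 1) / P v u" unfolding u0(2) by (rule billiard_inv[OF br u0(1) u])
    then show "\<theta> * P v u - 1 \<le> real (Icnt \<sigma> v u 0 i)" using pos[OF u] by (simp add: le_divide_eq)
    have "real (Icnt \<sigma> v u 0 i) / P v u \<le> \<theta>" unfolding \<theta>_def using fin u by (intro Max_ge) auto
    then show "real (Icnt \<sigma> v u 0 i) \<le> \<theta> * P v u" using pos[OF u] by (simp add: divide_le_eq)
  qed
  then show ?thesis by blast
qed

lemma discrep_arith:
  fixes D p :: "'a \<Rightarrow> real"
  assumes fin: "finite N" and u: "u \<in> N" and b: "\<And>x. x \<in> N \<Longrightarrow> \<bar>D x - L * p x\<bar> \<le> 1"
    and p0: "\<And>x. x \<in> N \<Longrightarrow> 0 \<le> p x" and ps: "(\<Sum>x\<in>N. p x) = 1"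
  shows "\<bar>D u - (\<Sum>x\<in>N. D x) * p u\<bar> \<le> 1 + (real (card N) - 2) * p u"
proof -
  define R where "R = (\<Sum>x\<in>N - {u}. D x)"
  have sD: "(\<Sum>x\<in>N. D x) = D u + R" unfolding R_def using fin u by (simp add: sum.remove)
  have sp: "(\<Sum>x\<in>N - {u}. p x) = 1 - p u" using fin u ps by (simp add: sum.remove)
  have pu1: "p u \<le> 1"
  proof -
    have "(\<Sum>x\<in>N - {u}. p x) \<ge> 0" by (rule sum_nonneg) (use p0 in auto)
    then show ?thesis using sp by simp
  qed
  have pu0: "0 \<le> p u" using p0 u by simp
  have "\<bar>R - L * (1 - p u)\<bar> = \<bar>\<Sum>x\<in>N - {u}. (D x - L * p x)\<bar>"
    unfolding R_def sp[symmetric] by (simp add: sum_subtractf sum_distrib_left)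
  also have "\<dots> \<le> (\<Sum>x\<in>N - {u}. \<bar>D x - L * p x\<bar>)" by (rule sum_abs)
  also have "\<dots> \<le> (\<Sum>x\<in>N - {u}. 1)" by (rule sum_mono) (simp add: b)
  also have "\<dots> = real (card N) - 1"
  proof -
    have "card N \<ge> 1" using fin u by (auto simp: Suc_le_eq card_gt_0_iff)
    then show ?thesis using fin u by (simp add: card_Diff_singleton of_nat_diff)
  qed
  finally have Rb: "\<bar>R - L * (1 - p u)\<bar> \<le> real (card N) - 1" .
  have Db: "\<bar>D u - L * p u\<bar> \<le> 1" using b u by simp
  have id: "D u - (D u + R) * p u = (1 - p u) * (D u - L * p u) - p u * (R - L * (1 - p u))"
    by (simp add: algebra_simps)
  have "\<bar>(1 - p u) * (D u - L * p u) - p u * (R - L * (1 - p u))\<bar>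
      \<le> (1 - p u) * \<bar>D u - L * p u\<bar> + p u * \<bar>R - L * (1 - p u)\<bar>"
    by (rule order_trans[OF abs_triangle_ineq4]) (simp add: abs_mult pu0 pu1)
  also have "\<dots> \<le> (1 - p u) * 1 + p u * (real (card N) - 1)"
    using pu0 pu1 Db Rb by (intro add_mono mult_left_mono) auto
  also have "\<dots> = 1 + (real (card N) - 2) * p u" by (simp add: algebra_simps)
  finally show ?thesis unfolding sD id .
qed

lemma billiard_interval:
  assumes br: "billiard_router P \<sigma>" and st: "stochastic P" and zz: "z \<le> z'" and u: "u \<in> nbhd P v"
  shows "\<bar>real (Icnt \<sigma> v u z z') - real (z' - z) * P v u\<bar> \<le> 1 + (real (card (nbhd P v)) - 2) * P v u"
proof -
  have fr: "functional_router P \<sigma>" using br unfolding billiard_router_def by simp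
  obtain \<theta>1 where t1: "\<forall>u\<in>nbhd P v. \<theta>1 * P v u - 1 \<le> real (Icnt \<sigma> v u 0 z) \<and> real (Icnt \<sigma> v u 0 z) \<le> \<theta>1 * P v u"
    using billiard_theta[OF br st] by blast
  obtain \<theta>2 where t2: "\<forall>u\<in>nbhd P v. \<theta>2 * P v u - 1 \<le> real (Icnt \<sigma> v u 0 z') \<and> real (Icnt \<sigma> v u 0 z') \<le> \<theta>2 * P v u"
    using billiard_theta[OF br st] by blast
  define D where "D x = real (Icnt \<sigma> v x z z')" for x
  have Dx: "D x = real (Icnt \<sigma> v x 0 z') - real (Icnt \<sigma> v x 0 z)" for x
    unfolding D_def using Icnt_split[OF zz, of \<sigma> v x] by simp
  have b: "\<bar>D x - (\<theta>2 - \<theta>1) * P v x\<bar> \<le> 1" if "x \<in> nbhd P v" for x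
    using t1 t2 that unfolding Dx by (simp add: abs_le_iff left_diff_distrib) (smt (verit))
  have p0: "\<And>x. 0 \<le> P v x" using st unfolding stochastic_def by blast
  have offN: "P v x = 0" if "x \<notin> nbhd P v" for x
  proof -
    have "\<not> 0 < P v x" using that unfolding nbhd_def by simp
    then show ?thesis using p0[of x] by linarith
  qed
  have ps: "(\<Sum>x\<in>nbhd P v. P v x) = 1"
  proof -
    have "(\<Sum>x\<in>nbhd P v. P v x) = (\<Sum>x\<in>UNIV. P v x)"
      by (rule sum.mono_neutral_left) (auto simp: offN)
    then show ?thesis using st unfolding stochastic_def by simp
  qed
  have sD: "(\<Sum>x\<in>nbhd P v. D x) = real (z' - z)"
  proof -
    have "(\<Sum>x\<in>nbhd P v. D x) = (\<Sum>x\<in>UNIV. D x)"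
      by (rule sum.mono_neutral_left) (auto simp: D_def Icnt_out[OF fr])
    also have "\<dots> = real (\<Sum>x\<in>UNIV. Icnt \<sigma> v x z z')" unfolding D_def by (rule of_nat_sum[symmetric])
    also have "\<dots> = real (z' - z)" by (simp only: Icnt_sum[OF zz])
    finally show ?thesis .
  qed
  have "\<bar>D u - (\<Sum>x\<in>nbhd P v. D x) * P v u\<bar> \<le> 1 + (real (card (nbhd P v)) - 2) * P v u"
    by (rule discrep_arith[OF _ u b p0 ps]) auto
  then show ?thesis using sD unfolding D_def by simp
qed

definition SS :: "('v::finite \<Rightarrow> nat \<Rightarrow> 'v) \<Rightarrow> ('v \<Rightarrow> nat) \<Rightarrow> nat \<Rightarrow> 'v \<Rightarrow> nat" where
  "SS \<sigma> \<chi>0 t = snd (router_state \<sigma> \<chi>0 t)"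

definition ee :: "('v::finite \<Rightarrow> 'v \<Rightarrow> real) \<Rightarrow> ('v \<Rightarrow> nat \<Rightarrow> 'v) \<Rightarrow> ('v \<Rightarrow> nat) \<Rightarrow> nat \<Rightarrow> 'v \<Rightarrow> 'v \<Rightarrow> real" where
  "ee P \<sigma> \<chi>0 t v u = real (Icnt \<sigma> v u (SS \<sigma> \<chi>0 t v) (SS \<sigma> \<chi>0 t v + chi \<sigma> \<chi>0 t v)) - real (chi \<sigma> \<chi>0 t v) * P v u"

definition EE :: "('v::finite \<Rightarrow> 'v \<Rightarrow> real) \<Rightarrow> ('v \<Rightarrow> nat \<Rightarrow> 'v) \<Rightarrow> ('v \<Rightarrow> nat) \<Rightarrow> nat \<Rightarrow> 'v \<Rightarrow> real" where
  "EE P \<sigma> \<chi>0 t u = (\<Sum>v\<in>UNIV. ee P \<sigma> \<chi>0 t v u)"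

lemma chi_Suc: "chi \<sigma> \<chi>0 (Suc t) u = (\<Sum>v\<in>UNIV. Icnt \<sigma> v u (SS \<sigma> \<chi>0 t v) (SS \<sigma> \<chi>0 t v + chi \<sigma> \<chi>0 t v))"
proof -
  obtain c S where rs: "router_state \<sigma> \<chi>0 t = (c, S)" by (cases "router_state \<sigma> \<chi>0 t")
  show ?thesis by (simp add: chi_def SS_def rs)
qed

lemma chi0: "chi \<sigma> \<chi>0 0 = \<chi>0" by (simp add: chi_def)

lemma chi_rec: "real (chi \<sigma> \<chi>0 (Suc t) u) = (\<Sum>y\<in>UNIV. real (chi \<sigma> \<chi>0 t y) * P y u) + EE P \<sigma> \<chi>0 t u"
  unfolding chi_Suc EE_def ee_def by (simp add: sum_subtractf)

lemma mu_rec: "mu P \<chi>0 (Suc t) w = (\<Sum>y\<in>UNIV. mu P \<chi>0 t y * P y w)"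
proof -
  have "mu P \<chi>0 (Suc t) w = (\<Sum>v\<in>UNIV. \<Sum>y\<in>UNIV. real (\<chi>0 v) * mpow P t v y * P y w)"
    unfolding mu_def by (simp add: sum_distrib_left mult.assoc)
  also have "\<dots> = (\<Sum>y\<in>UNIV. \<Sum>v\<in>UNIV. real (\<chi>0 v) * mpow P t v y * P y w)" by (rule sum.swap)
  also have "\<dots> = (\<Sum>y\<in>UNIV. mu P \<chi>0 t y * P y w)" unfolding mu_def by (simp add: sum_distrib_right)
  finally show ?thesis .
qed

lemma mu0: "mu P \<chi>0 0 w = real (\<chi>0 w)"
proof -
  have "mu P \<chi>0 0 w = (\<Sum>v\<in>UNIV. if v = w then real (\<chi>0 v) else 0)"
    unfolding mu_def by (rule sum.cong) auto
  then show ?thesis by simp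
qed

lemma err_formula:
  "real (chi \<sigma> \<chi>0 T w) - mu P \<chi>0 T w = (\<Sum>s<T. \<Sum>u\<in>UNIV. EE P \<sigma> \<chi>0 s u * mpow P (T - Suc s) u w)"
proof (induction T arbitrary: w)
  case 0 then show ?case by (simp add: chi0 mu0)
next
  case (Suc T)
  have "real (chi \<sigma> \<chi>0 (Suc T) w) - mu P \<chi>0 (Suc T) w
      = (\<Sum>y\<in>UNIV. (real (chi \<sigma> \<chi>0 T y) - mu P \<chi>0 T y) * P y w) + EE P \<sigma> \<chi>0 T w"
    by (simp add: chi_rec mu_rec left_diff_distrib sum_subtractf)
  also have "\<dots> = (\<Sum>y\<in>UNIV. (\<Sum>s<T. \<Sum>u\<in>UNIV. EE P \<sigma> \<chi>0 s u * mpow P (T - Suc s) u y) * P y w) + EE P \<sigma> \<chi>0 T w"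
    by (simp add: Suc)
  also have "(\<Sum>y\<in>UNIV. (\<Sum>s<T. \<Sum>u\<in>UNIV. EE P \<sigma> \<chi>0 s u * mpow P (T - Suc s) u y) * P y w)
      = (\<Sum>s<T. \<Sum>u\<in>UNIV. EE P \<sigma> \<chi>0 s u * mpow P (Suc T - Suc s) u w)"
  proof -
    have "(\<Sum>y\<in>UNIV. (\<Sum>s<T. \<Sum>u\<in>UNIV. EE P \<sigma> \<chi>0 s u * mpow P (T - Suc s) u y) * P y w)
        = (\<Sum>y\<in>UNIV. \<Sum>s<T. \<Sum>u\<in>UNIV. EE P \<sigma> \<chi>0 s u * mpow P (T - Suc s) u y * P y w)"
      by (simp add: sum_distrib_right)
    also have "\<dots> = (\<Sum>s<T. \<Sum>y\<in>UNIV. \<Sum>u\<in>UNIV. EE P \<sigma> \<chi>0 s u * mpow P (T - Suc s) u y * P y w)"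
      by (rule sum.swap)
    also have "\<dots> = (\<Sum>s<T. \<Sum>u\<in>UNIV. \<Sum>y\<in>UNIV. EE P \<sigma> \<chi>0 s u * mpow P (T - Suc s) u y * P y w)"
      by (rule sum.cong[OF refl], rule sum.swap)
    also have "\<dots> = (\<Sum>s<T. \<Sum>u\<in>UNIV. EE P \<sigma> \<chi>0 s u * mpow P (Suc (T - Suc s)) u w)"
      by (simp add: sum_distrib_left mult.assoc)
    also have "\<dots> = (\<Sum>s<T. \<Sum>u\<in>UNIV. EE P \<sigma> \<chi>0 s u * mpow P (Suc T - Suc s) u w)"
      by (rule sum.cong[OF refl]) (simp add: Suc_diff_Suc)
    finally show ?thesis .
  qed
  also have "EE P \<sigma> \<chi>0 T w = (\<Sum>u\<in>UNIV. EE P \<sigma> \<chi>0 T u * mpow P (Suc T - Suc T) u w)"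
  proof -
    have "(\<Sum>u\<in>UNIV. EE P \<sigma> \<chi>0 T u * mpow P (Suc T - Suc T) u w) = (\<Sum>u\<in>UNIV. if u = w then EE P \<sigma> \<chi>0 T u else 0)"
      by (rule sum.cong) auto
    then show ?thesis by simp
  qed
  finally show ?case by simp
qed

lemma row_nbhd:
  assumes st: "stochastic P"
  shows "(\<Sum>x\<in>nbhd P v. P v x) = 1" and "x \<notin> nbhd P v \<Longrightarrow> P v x = 0"
proof -
  have p0: "\<And>x. 0 \<le> P v x" using st unfolding stochastic_def by blast
  have offN: "P v x = 0" if "x \<notin> nbhd P v" for x
  proof -
    have "\<not> 0 < P v x" using that unfolding nbhd_def by simp
    then show ?thesis using p0[of x] by linarith
  qed
  then show "x \<notin> nbhd P v \<Longrightarrow> P v x = 0" by blast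
  have "(\<Sum>x\<in>nbhd P v. P v x) = (\<Sum>x\<in>UNIV. P v x)"
    by (rule sum.mono_neutral_left) (auto simp: offN)
  then show "(\<Sum>x\<in>nbhd P v. P v x) = 1" using st unfolding stochastic_def by simp
qed

lemma EE_sum0:
  assumes st: "stochastic P" and fr: "functional_router P \<sigma>"
  shows "(\<Sum>u\<in>UNIV. EE P \<sigma> \<chi>0 t u) = 0"
proof -
  have rs: "\<And>v. (\<Sum>u\<in>UNIV. P v u) = 1" using st unfolding stochastic_def by blast
  have "(\<Sum>u\<in>UNIV. EE P \<sigma> \<chi>0 t u) = (\<Sum>v\<in>UNIV. \<Sum>u\<in>UNIV. ee P \<sigma> \<chi>0 t v u)"
    unfolding EE_def by (rule sum.swap)
  also have "\<dots> = 0"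
  proof -
    have "(\<Sum>u\<in>UNIV. ee P \<sigma> \<chi>0 t v u) = 0" for v
    proof -
    have "(\<Sum>u\<in>UNIV. real (Icnt \<sigma> v u (SS \<sigma> \<chi>0 t v) (SS \<sigma> \<chi>0 t v + chi \<sigma> \<chi>0 t v)))
        = real (\<Sum>u\<in>UNIV. Icnt \<sigma> v u (SS \<sigma> \<chi>0 t v) (SS \<sigma> \<chi>0 t v + chi \<sigma> \<chi>0 t v))"
      by (rule of_nat_sum[symmetric])
    also have "\<dots> = real (chi \<sigma> \<chi>0 t v)" by (simp only: Icnt_sum[OF le_add1] add_diff_cancel_left')
    finally have a: "(\<Sum>u\<in>UNIV. real (Icnt \<sigma> v u (SS \<sigma> \<chi>0 t v) (SS \<sigma> \<chi>0 t v + chi \<sigma> \<chi>0 t v))) = real (chi \<sigma> \<chi>0 t v)" .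
    have b: "(\<Sum>u\<in>UNIV. real (chi \<sigma> \<chi>0 t v) * P v u) = real (chi \<sigma> \<chi>0 t v)"
      by (simp add: sum_distrib_left[symmetric] rs)
    show "(\<Sum>u\<in>UNIV. ee P \<sigma> \<chi>0 t v u) = 0"
      unfolding ee_def sum_subtractf a b by simp
    qed
    then show ?thesis by simp
  qed
  finally show ?thesis .
qed

lemma ee_bound:
  assumes br: "billiard_router P \<sigma>" and st: "stochastic P"
  shows "\<bar>ee P \<sigma> \<chi>0 t v u\<bar> \<le> (if u \<in> nbhd P v then 1 + (real (card (nbhd P v)) - 2) * P v u else 0)"
proof (cases "u \<in> nbhd P v")
  case True
  have "\<bar>real (Icnt \<sigma> v u (SS \<sigma> \<chi>0 t v) (SS \<sigma> \<chi>0 t v + chi \<sigma> \<chi>0 t v))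
         - real (SS \<sigma> \<chi>0 t v + chi \<sigma> \<chi>0 t v - SS \<sigma> \<chi>0 t v) * P v u\<bar>
        \<le> 1 + (real (card (nbhd P v)) - 2) * P v u"
    by (rule billiard_interval[OF br st le_add1 True])
  then show ?thesis using True unfolding ee_def by simp
next
  case False
  have fr: "functional_router P \<sigma>" using br unfolding billiard_router_def by simp
  show ?thesis using False unfolding ee_def by (simp add: Icnt_out[OF fr False] row_nbhd(2)[OF st False])
qed

lemma card_le_maxdeg: "card (nbhd P v) \<le> max_degree P"
  unfolding max_degree_def by (rule Max_ge) auto

lemma rev_pos:
  assumes "reversible P \<pi>" "\<And>x. \<pi> x > 0"
  shows "P v u > 0 \<longleftrightarrow> P u v > 0"
proof -
  have e: "\<pi> u * P u v = \<pi> v * P v u" using assms(1) unfolding reversible_def by blast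
  show ?thesis using e assms(2)[of u] assms(2)[of v]
    by (metis mult_pos_pos zero_less_mult_pos)
qed

lemma key_v:
  assumes rv: "reversible P \<pi>" and pp: "\<And>x. \<pi> x > 0" and pm: "0 < pm" "\<And>x. pm \<le> \<pi> x"
    and st: "stochastic P" and D2: "2 \<le> D" and cD: "real (card (nbhd P v)) \<le> D"
  shows "(if u \<in> nbhd P v then 1 + (real (card (nbhd P v)) - 2) * P v u else 0) / \<pi> u
         \<le> ((if P u v > 0 then 1 else 0) + (D - 2) * P u v) / pm"
proof (cases "u \<in> nbhd P v")
  case True
  then have pvu: "P v u > 0" unfolding nbhd_def by simp
  then have puv: "P u v > 0" using rev_pos[OF rv pp] by blast
  have e: "\<pi> u * P u v = \<pi> v * P v u" using rv unfolding reversible_def by blast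
  have ratio: "P v u / \<pi> u = P u v / \<pi> v" using e pp[of u] pp[of v] by (simp add: field_simps)
  have "(1 + (real (card (nbhd P v)) - 2) * P v u) / \<pi> u = 1 / \<pi> u + (real (card (nbhd P v)) - 2) * (P v u / \<pi> u)"
    by (simp add: add_divide_distrib)
  also have "\<dots> \<le> 1 / \<pi> u + (D - 2) * (P v u / \<pi> u)"
    using cD pvu pp[of u] by (intro add_left_mono mult_right_mono) auto
  also have "\<dots> = 1 / \<pi> u + (D - 2) * (P u v / \<pi> v)" by (simp add: ratio)
  also have "\<dots> \<le> 1 / pm + (D - 2) * (P u v / pm)"
  proof (rule add_mono)
    show "1 / \<pi> u \<le> 1 / pm" using pm pp by (simp add: frac_le)
    have "P u v / \<pi> v \<le> P u v / pm" using pm pp puv by (simp add: frac_le)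
    then show "(D - 2) * (P u v / \<pi> v) \<le> (D - 2) * (P u v / pm)" using D2 by (intro mult_left_mono) auto
  qed
  also have "\<dots> = ((if P u v > 0 then 1 else 0) + (D - 2) * P u v) / pm"
    using puv by (simp add: add_divide_distrib)
  finally show ?thesis using True by simp
next
  case False
  have "0 \<le> P u v" using st unfolding stochastic_def by blast
  then have "0 \<le> ((if P u v > 0 then 1 else 0) + (D - 2) * P u v) / pm"
    using pm D2 by (intro divide_nonneg_pos) auto
  then show ?thesis using False by simp
qed

lemma sum_ind_card: "(\<Sum>v\<in>UNIV. (if P u v > 0 then 1 else 0) :: real) = real (card (nbhd P u))"
proof -
  have "(\<Sum>v\<in>UNIV. (if P u v > 0 then 1 else 0) :: real) = (\<Sum>v\<in>nbhd P u. 1)"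
    unfolding nbhd_def by (simp add: sum.If_cases)
  then show ?thesis by simp
qed

lemma step_bound:
  assumes erg: "ergodic P" and sp: "stationary P \<pi>" and rv: "reversible P \<pi>"
    and br: "billiard_router P \<sigma>" and D2: "2 \<le> real (max_degree P)"
  shows "\<bar>\<Sum>u\<in>UNIV. EE P \<sigma> \<chi>0 s u * mpow P k u w\<bar>
         \<le> 4 * (real (max_degree P) - 1) * (\<pi> w / pi_min \<pi>) * dTV (mpow P k w) \<pi>"
proof -
  define D where "D = real (max_degree P)"
  define pm where "pm = pi_min \<pi>"
  have st: "stochastic P" using erg unfolding ergodic_def by simp
  have fr: "functional_router P \<sigma>" using br unfolding billiard_router_def by simp
  have pp: "\<And>x. \<pi> x > 0" by (rule pi_pos[OF erg sp])
  have pm0: "0 < pm" unfolding pm_def by (rule pi_min_pos[OF erg sp])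
  have pml: "\<And>x. pm \<le> \<pi> x" unfolding pm_def by (rule pi_min_pos[OF erg sp])
  have D2': "2 \<le> D" using D2 unfolding D_def .
  define x where "x u = mpow P k u w - \<pi> w" for u
  define a where "a u = \<bar>mpow P k w u - \<pi> u\<bar>" for u
  define b where "b v u = (if u \<in> nbhd P v then 1 + (real (card (nbhd P v)) - 2) * P v u else 0)" for v u
  have h1: "(\<Sum>u\<in>UNIV. EE P \<sigma> \<chi>0 s u * mpow P k u w) = (\<Sum>u\<in>UNIV. EE P \<sigma> \<chi>0 s u * x u)"
  proof -
    have "(\<Sum>u\<in>UNIV. EE P \<sigma> \<chi>0 s u * x u) = (\<Sum>u\<in>UNIV. EE P \<sigma> \<chi>0 s u * mpow P k u w) - (\<Sum>u\<in>UNIV. EE P \<sigma> \<chi>0 s u) * \<pi> w"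
      unfolding x_def by (simp add: right_diff_distrib sum_subtractf sum_distrib_right)
    then show ?thesis using EE_sum0[OF st fr] by simp
  qed
  have h2: "\<bar>x u\<bar> = \<pi> w * a u / \<pi> u" for u
  proof -
    have r: "\<pi> u * mpow P k u w = \<pi> w * mpow P k w u" by (rule mpow_rev[OF rv])
    have "x u = \<pi> w * (mpow P k w u - \<pi> u) / \<pi> u"
      unfolding x_def using r pp[of u] by (simp add: field_simps)
    then show ?thesis unfolding a_def using pp[of u] pp[of w] by (simp add: abs_mult)
  qed
  have h3: "\<bar>EE P \<sigma> \<chi>0 s u\<bar> \<le> (\<Sum>v\<in>UNIV. b v u)" for u
  proof -
    have "\<bar>EE P \<sigma> \<chi>0 s u\<bar> \<le> (\<Sum>v\<in>UNIV. \<bar>ee P \<sigma> \<chi>0 s v u\<bar>)" unfolding EE_def by (rule sum_abs)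
    also have "\<dots> \<le> (\<Sum>v\<in>UNIV. b v u)" unfolding b_def by (rule sum_mono) (rule ee_bound[OF br st])
    finally show ?thesis .
  qed
  have h4: "\<bar>EE P \<sigma> \<chi>0 s u\<bar> * \<bar>x u\<bar> \<le> (2 * D - 2) / pm * \<pi> w * a u" for u
  proof -
    have an: "0 \<le> \<pi> w * a u" using pp[of w] unfolding a_def by simp
    have "\<bar>EE P \<sigma> \<chi>0 s u\<bar> * \<bar>x u\<bar> \<le> (\<Sum>v\<in>UNIV. b v u) * (\<pi> w * a u / \<pi> u)"
      unfolding h2 by (rule mult_right_mono[OF h3]) (use an pp[of u] in simp)
    also have "\<dots> = (\<pi> w * a u) * (\<Sum>v\<in>UNIV. b v u / \<pi> u)"
      by (simp add: sum_divide_distrib[symmetric])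
    also have "\<dots> \<le> (\<pi> w * a u) * (\<Sum>v\<in>UNIV. ((if P u v > 0 then 1 else 0) + (D - 2) * P u v) / pm)"
    proof (rule mult_left_mono[OF sum_mono an])
      fix v
      have cD: "real (card (nbhd P v)) \<le> D" unfolding D_def using card_le_maxdeg[of P v] by simp
      show "b v u / \<pi> u \<le> ((if P u v > 0 then 1 else 0) + (D - 2) * P u v) / pm"
        unfolding b_def by (rule key_v[OF rv pp pm0 pml st D2' cD])
    qed
    also have "(\<Sum>v\<in>UNIV. ((if P u v > 0 then 1 else 0) + (D - 2) * P u v) / pm)
        = (real (card (nbhd P u)) + (D - 2)) / pm"
    proof -
      have rs: "(\<Sum>v\<in>UNIV. P u v) = 1" using st unfolding stochastic_def by blast
      have "(\<Sum>v\<in>UNIV. ((if P u v > 0 then 1 else 0) + (D - 2) * P u v) / pm)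
          = ((\<Sum>v\<in>UNIV. (if P u v > 0 then 1 else 0)) + (D - 2) * (\<Sum>v\<in>UNIV. P u v)) / pm"
        by (simp add: sum_divide_distrib[symmetric] sum.distrib sum_distrib_left)
      then show ?thesis by (simp add: sum_ind_card rs)
    qed
    also have "(\<pi> w * a u) * ((real (card (nbhd P u)) + (D - 2)) / pm) \<le> (\<pi> w * a u) * ((2 * D - 2) / pm)"
    proof (rule mult_left_mono[OF _ an])
      have "real (card (nbhd P u)) \<le> D" unfolding D_def using card_le_maxdeg[of P u] by simp
      then show "(real (card (nbhd P u)) + (D - 2)) / pm \<le> (2 * D - 2) / pm"
        using pm0 by (simp add: divide_right_mono)
    qed
    finally show ?thesis by (simp add: mult.commute mult.left_commute)
  qed
  have "\<bar>\<Sum>u\<in>UNIV. EE P \<sigma> \<chi>0 s u * mpow P k u w\<bar> \<le> (\<Sum>u\<in>UNIV. \<bar>EE P \<sigma> \<chi>0 s u * x u\<bar>)"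
    unfolding h1 by (rule sum_abs)
  also have "\<dots> \<le> (\<Sum>u\<in>UNIV. (2 * D - 2) / pm * \<pi> w * a u)"
    by (rule sum_mono) (simp only: abs_mult h4)
  also have "\<dots> = (2 * D - 2) / pm * \<pi> w * (2 * dTV (mpow P k w) \<pi>)"
    unfolding dTV_def a_def by (simp add: sum_distrib_left)
  also have "\<dots> = 4 * (D - 1) * (\<pi> w / pm) * dTV (mpow P k w) \<pi>"
    by (simp add: field_simps)
  finally show ?thesis unfolding D_def pm_def .
qed

lemma maxdeg_ge1:
  assumes st: "stochastic P" shows "1 \<le> max_degree P"
proof -
  obtain v :: 'a where True by blast
  have "nbhd P v \<noteq> {}" by (rule nbhd_ne[OF st])
  then have "1 \<le> card (nbhd P v)" by (simp add: Suc_le_eq card_gt_0_iff)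
  then show ?thesis using card_le_maxdeg[of P v] by simp
qed

lemma ee_zero_deg1:
  assumes br: "billiard_router P \<sigma>" and st: "stochastic P" and d1: "max_degree P \<le> 1"
  shows "ee P \<sigma> \<chi>0 t v u = 0"
proof -
  have bnd: "\<bar>ee P \<sigma> \<chi>0 t v u\<bar> \<le> (if u \<in> nbhd P v then 1 + (real (card (nbhd P v)) - 2) * P v u else 0)"
    by (rule ee_bound[OF br st])
  show ?thesis
  proof (cases "u \<in> nbhd P v")
    case True
    have c1: "card (nbhd P v) \<le> 1" using card_le_maxdeg[of P v] d1 by simp
    have c0: "card (nbhd P v) \<noteq> 0" using True by (simp add: card_eq_0_iff) blast
    have c: "card (nbhd P v) = 1" using c1 c0 by linarith
    then obtain x where "nbhd P v = {x}" by (rule card_1_singletonE)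
    then have N: "nbhd P v = {u}" using True by simp
    have "P v u = 1" using row_nbhd(1)[OF st, of v] unfolding N by simp
    then show ?thesis using bnd True c by simp
  next
    case False
    then show ?thesis using bnd by simp
  qed
qed

theorem theorem5p4:
  fixes P :: "'v::finite \<Rightarrow> 'v \<Rightarrow> real" and \<pi> :: "'v \<Rightarrow> real"
    and \<sigma> :: "'v \<Rightarrow> nat \<Rightarrow> 'v" and \<chi>0 :: "'v \<Rightarrow> nat"
  assumes "ergodic P" and "stationary P \<pi>" and "reversible P \<pi>"
    and "billiard_router P \<sigma>"
  shows "\<forall>w T. \<bar>real (chi \<sigma> \<chi>0 T w) - mu P \<chi>0 T w\<bar>
           \<le> 6 * \<pi> w / pi_min \<pi> * real (mixing_rate P \<pi>) * (real (max_degree P) - 1)"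
proof (intro allI)
  fix w T
  have st: "stochastic P" using assms(1) unfolding ergodic_def by simp
  have pm0: "0 < pi_min \<pi>" by (rule pi_min_pos[OF assms(1,2)])
  have pw: "0 < \<pi> w" by (rule pi_pos[OF assms(1,2)])
  have d1: "1 \<le> max_degree P" by (rule maxdeg_ge1[OF st])
  show "\<bar>real (chi \<sigma> \<chi>0 T w) - mu P \<chi>0 T w\<bar>
           \<le> 6 * \<pi> w / pi_min \<pi> * real (mixing_rate P \<pi>) * (real (max_degree P) - 1)"
  proof (cases "max_degree P \<le> 1")
    case True
    have "\<And>s u. EE P \<sigma> \<chi>0 s u = 0"
      unfolding EE_def using ee_zero_deg1[OF assms(4) st True] by simp
    then have "real (chi \<sigma> \<chi>0 T w) - mu P \<chi>0 T w = 0" by (simp add: err_formula)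
    moreover have "real (max_degree P) = 1" using True d1 by simp
    ultimately show ?thesis by simp
  next
    case False
    then have D2: "2 \<le> real (max_degree P)" by simp
    define K where "K = 4 * (real (max_degree P) - 1) * (\<pi> w / pi_min \<pi>)"
    have K0: "0 \<le> K" unfolding K_def using D2 pm0 pw by simp
    have "\<bar>real (chi \<sigma> \<chi>0 T w) - mu P \<chi>0 T w\<bar>
        = \<bar>\<Sum>s<T. \<Sum>u\<in>UNIV. EE P \<sigma> \<chi>0 s u * mpow P (T - Suc s) u w\<bar>" by (simp add: err_formula)
    also have "\<dots> \<le> (\<Sum>s<T. \<bar>\<Sum>u\<in>UNIV. EE P \<sigma> \<chi>0 s u * mpow P (T - Suc s) u w\<bar>)" by (rule sum_abs)
    also have "\<dots> \<le> (\<Sum>s<T. K * dTV (mpow P (T - Suc s) w) \<pi>)"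
      unfolding K_def by (rule sum_mono) (rule step_bound[OF assms D2])
    also have "\<dots> = (\<Sum>t<T. K * dTV (mpow P t w) \<pi>)"
      by (rule sum.nat_diff_reindex)
    also have "\<dots> = K * (\<Sum>t<T. dTV (mpow P t w) \<pi>)" by (simp add: sum_distrib_left)
    also have "\<dots> \<le> K * (3/2 * real (mixing_rate P \<pi>))"
      by (rule mult_left_mono[OF mix_sum[OF assms(1,2)] K0])
    also have "\<dots> = 6 * \<pi> w / pi_min \<pi> * real (mixing_rate P \<pi>) * (real (max_degree P) - 1)"
      unfolding K_def using pm0 by (simp add: field_simps)
    finally show ?thesis .
  qed
qed

end
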